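(* Let $p\in(1,\infty)$, $X\in\mathfrak A_p$, and $q\in(1,p)$ with $X\in\mathfrak A_q$. Let $\theta\in[0,q)$, $S\in\mathcal{LCR}_\theta(X)$ closed, and $\{\mathfrak m_k\}\in\mathfrak M_\theta(S)$ with parameter $\epsilon\in(0,\frac1{10}]$. Let $\alpha>\theta/p$. Then for each $R>0$ there is $C>0$ such that $$\|M^R_{q,\alpha}(g)\|_{L^p(\mathfrak m_0)}\le C\|g\|_{L^p(\mu)}\quad\text{for all }g\in L^p(\mu),$$ where $M^R_{q,\alpha}(g)(x)=\sup_{r\in(0,R]}r^\alpha\big(\frac1{\mu(B_r(x))}\int_{B_r(x)}|g|^q\,d\mu\big)^{1/q}$.
   Context: A metric measure space is a triple $X=(X,d,\mu)$ with $(X,d)$ a complete separable metric space and $\mu$ a Borel regular measure with $0<\mu(B)<\infty$ for every ball $B$ and $\operatorname{supp}\mu=X$. All balls are closed: $B_r(x)=\{y:d(x,y)\le r\}$. A measure on $X$ means a nonzero Borel regular locally finite (outer) measure. $\mu$ is uniformly locally doubling if for every $R>0$, $\sup_{r\in(0,R]}\sup_x\mu(B_{2r}(x))/\mu(B_r(x))<\infty$. $\operatorname{lip}f(x)=\limsup_{y\to x}|f(y)-f(x)|/d(x,y)$ at accumulation points and $0$ otherwise; for a measure $\mathfrak m$, $\mathcal E_{\mathfrak m}(f,G)=\inf_c\frac1{\mathfrak m(G)}\int_G|f-c|d\mathfrak m$. $X\in\mathfrak A_q$ if $\mu$ is uniformly locally doubling and for every $R>0$ there are $C>0,\lambda\ge1$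 with $\mathcal E_\mu(f,B_r(x))\le Cr(\frac1{\mu(B_{\lambda r}(x))}\int_{B_{\lambda r}(x)}(\operatorname{lip}f)^qd\mu)^{1/q}$ for all Lipschitz $f$, $x$, $r\in(0,R]$. For $\theta\ge0$: $\mathcal H_{\theta,\delta}(E)=\inf\{\sum_i\mu(B_{r_i}(x_i))/r_i^\theta:E\subset\bigcup_iB_{r_i}(x_i),\ r_i<\delta\}$. $S\in\mathcal{LCR}_\theta(X)$ if there is $\lambda>0$ with $\mathcal H_{\theta,r}(B_r(x)\cap S)\ge\lambda\mu(B_r(x))/r^\theta$ for all $x\in S$, $r\in(0,1]$. $\{\mathfrak m_k\}_{k=0}^\infty\in\mathfrak M_\theta(S)$ (parameter $\epsilon$) means: (M1) $\operatorname{supp}\mathfrak m_k=S$; (M2) $\exists C_1$: $\mathfrak m_k(B_r(x))\le C_1\mu(B_r(x))/r^\theta$ for all $k$, $x\in X$, $r\in(0,\epsilon^k]$; (M3) $\exists C_2$: $\mathfrak m_k(B_r(x))\ge C_2\mu(B_r(x))/r^\theta$ for all $k$, $x\in S$, $r\in[\epsilon^k,1]$; (M4) $\mathfrak m_k=w_k\mathfrak m_0$, $w_k\in L^\infty(\mathfrak m_0)$, $\exists C_3$: $\epsilon^{\theta j}/C_3\le w_k/w_{k+j}\le C_3$ $\mathfrak m_0$-a.e. on $S$ for all $k,j$. *)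

theory Defs
  imports "HOL-Analysis.Analysis"
begin

definition epowr :: "ennreal \<Rightarrow> real \<Rightarrow> ennreal" where
  "epowr a s = (if a = \<infinity> then \<infinity> else ennreal (enn2real a powr s))"

definition avg :: "'a measure \<Rightarrow> 'a set \<Rightarrow> ('a \<Rightarrow> ennreal) \<Rightarrow> ennreal" where
  "avg M B f = (\<integral>\<^sup>+ y\<in>B. f y \<partial>M) / emeasure M B"

definition lp_norm :: "'a measure \<Rightarrow> ('a \<Rightarrow> ennreal) \<Rightarrow> real \<Rightarrow> ennreal" where
  "lp_norm M F p = epowr (\<integral>\<^sup>+ x. epowr (F x) p \<partial>M) (1 / p)"

(* metric measure space (closed balls cball); complete separable via polish_space *)
definition mms :: "('a::polish_space) measure \<Rightarrow> bool" where
  "mms \<mu> \<longleftrightarrow> sets \<mu> = sets borel \<and>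
     (\<forall>x r. r > 0 \<longrightarrow> 0 < emeasure \<mu> (cball x r) \<and> emeasure \<mu> (cball x r) < \<infinity>)"

definition unif_loc_doubling :: "('a::metric_space) measure \<Rightarrow> bool" where
  "unif_loc_doubling \<mu> \<longleftrightarrow> (\<forall>R>0. \<exists>D. \<forall>r\<in>{0<..R}. \<forall>x.
      emeasure \<mu> (cball x (2*r)) \<le> ennreal D * emeasure \<mu> (cball x r))"

definition lipc :: "('a::metric_space \<Rightarrow> real) \<Rightarrow> 'a \<Rightarrow> ennreal" where
  "lipc f x = (if x islimpt UNIV
      then Limsup (at x) (\<lambda>y. ennreal (\<bar>f y - f x\<bar> / dist x y)) else 0)"

definition osc :: "'a measure \<Rightarrow> ('a \<Rightarrow> real) \<Rightarrow> 'a set \<Rightarrow> ennreal" where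
  "osc M f G = (INF c::real. avg M G (\<lambda>y. ennreal \<bar>f y - c\<bar>))"

definition class_A :: "('a::polish_space) measure \<Rightarrow> real \<Rightarrow> bool" where
  "class_A \<mu> q \<longleftrightarrow> unif_loc_doubling \<mu> \<and>
     (\<forall>R>0. \<exists>C>0. \<exists>lam\<ge>1. \<forall>f x r. (\<exists>L. L-lipschitz_on UNIV f) \<longrightarrow> r \<in> {0<..R} \<longrightarrow>
        osc \<mu> f (cball x r) \<le>
          ennreal (C * r) * epowr (avg \<mu> (cball x (lam*r)) (\<lambda>y. epowr (lipc f y) q)) (1/q))"

definition H_content :: "'a::metric_space measure \<Rightarrow> real \<Rightarrow> real \<Rightarrow> 'a set \<Rightarrow> ennreal" where
  "H_content \<mu> \<theta> \<delta> E = (INF (c, s) \<in> {(c::nat \<Rightarrow> 'a, s::nat \<Rightarrow> real).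
       (\<forall>i. 0 < s i \<and> s i < \<delta>) \<and> E \<subseteq> (\<Union>i. cball (c i) (s i))}.
     (\<Sum>i. emeasure \<mu> (cball (c i) (s i)) / ennreal (s i powr \<theta>)))"

definition LCR :: "'a::metric_space measure \<Rightarrow> real \<Rightarrow> 'a set \<Rightarrow> bool" where
  "LCR \<mu> \<theta> S \<longleftrightarrow> (\<exists>lam>0. \<forall>x\<in>S. \<forall>r\<in>{0<..1}.
      H_content \<mu> \<theta> r (cball x r \<inter> S) \<ge> ennreal lam * emeasure \<mu> (cball x r) / ennreal (r powr \<theta>))"

definition msupp :: "'a::metric_space measure \<Rightarrow> 'a set" where
  "msupp M = {x. \<forall>r>0. emeasure M (ball x r) > 0}"

(* "a measure on X": nonzero, Borel, locally finite *)
definition loc_finite_borel :: "'a::metric_space measure \<Rightarrow> bool" where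
  "loc_finite_borel M \<longleftrightarrow> sets M = sets borel \<and> emeasure M UNIV \<noteq> 0 \<and>
     (\<forall>x. \<exists>r>0. emeasure M (ball x r) < \<infinity>)"

definition frakM :: "'a::metric_space measure \<Rightarrow> real \<Rightarrow> 'a set \<Rightarrow> real \<Rightarrow> (nat \<Rightarrow> 'a measure) \<Rightarrow> bool" where
  "frakM \<mu> \<theta> S \<epsilon> m \<longleftrightarrow>
     (\<forall>k. loc_finite_borel (m k)) \<and>
     (\<forall>k. msupp (m k) = S) \<and>
     (\<exists>C1>0. \<forall>k x r. 0 < r \<and> r \<le> \<epsilon> ^ k \<longrightarrow>
        emeasure (m k) (cball x r) \<le> ennreal C1 * emeasure \<mu> (cball x r) / ennreal (r powr \<theta>)) \<and>
     (\<exists>C2>0. \<forall>k. \<forall>x\<in>S. \<forall>r. \<epsilon> ^ k \<le> r \<and> r \<le> 1 \<longrightarrow>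
        emeasure (m k) (cball x r) \<ge> ennreal C2 * emeasure \<mu> (cball x r) / ennreal (r powr \<theta>)) \<and>
     (\<exists>w :: nat \<Rightarrow> 'a \<Rightarrow> real.
        (\<forall>k. w k \<in> borel_measurable (m 0) \<and> (\<forall>x. w k x \<ge> 0) \<and>
             (\<exists>K. AE x in m 0. w k x \<le> K) \<and>
             m k = density (m 0) (\<lambda>x. ennreal (w k x))) \<and>
        (\<exists>C3>0. \<forall>k j. AE x in m 0. x \<in> S \<longrightarrow>
             (\<epsilon> ^ j) powr \<theta> / C3 \<le> w k x / w (k + j) x \<and> w k x / w (k + j) x \<le> C3))"

definition maxfun :: "'a::metric_space measure \<Rightarrow> real \<Rightarrow> real \<Rightarrow> real \<Rightarrow> ('a \<Rightarrow> real) \<Rightarrow> 'a \<Rightarrow> ennreal" where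
  "maxfun \<mu> q \<alpha> R g x = (SUP r\<in>{0<..R}. ennreal (r powr \<alpha>) *
      epowr (avg \<mu> (cball x r) (\<lambda>y. ennreal (\<bar>g y\<bar> powr q))) (1/q))"

end

theory Submission
  imports Defs
begin


lemma sf_mu:
  fixes mu :: "'a::polish_space measure"
  assumes "sets mu = sets borel" "\<And>x r. r > 0 \<Longrightarrow> emeasure mu (cball x r) < \<infinity>"
  shows "sigma_finite_measure mu"
proof
  have sp: "space mu = UNIV" using sets_eq_imp_space_eq[OF assms(1)] by simp
  show "\<exists>A. countable A \<and> A \<subseteq> sets mu \<and> \<Union> A = space mu \<and> (\<forall>a\<in>A. emeasure mu a \<noteq> \<infinity>)"
  proof (intro exI[of _ "range (\<lambda>n::nat. cball undefined (Suc n))"] conjI)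
    show "\<Union> (range (\<lambda>n::nat. cball undefined (Suc n))) = space mu"
      unfolding sp
    proof (auto)
      fix x :: 'a
      obtain n :: nat where "dist undefined x < n" using reals_Archimedean2 by blast
      then show "\<exists>n. dist undefined x \<le> 1 + real n" by (intro exI[of _ n]) auto
    qed
  qed (use assms in \<open>auto simp: less_top[symmetric]\<close>)
qed

lemma sf_m0:
  fixes m0 :: "'a::polish_space measure"
  assumes "sets m0 = sets borel" "\<And>x. emeasure m0 (cball x 1) < \<infinity>"
  shows "sigma_finite_measure m0"
proof
  have sp: "space m0 = UNIV" using sets_eq_imp_space_eq[OF assms(1)] by simp
  obtain D :: "'a set" where D: "countable D" "\<And>X. open X \<Longrightarrow> X \<noteq> {} \<Longrightarrow> \<exists>d\<in>D. d \<in> X"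
    using countable_dense_exists by blast
  show "\<exists>A. countable A \<and> A \<subseteq> sets m0 \<and> \<Union> A = space m0 \<and> (\<forall>a\<in>A. emeasure m0 a \<noteq> \<infinity>)"
  proof (intro exI[of _ "(\<lambda>d. cball d 1) ` D"] conjI)
    show "\<Union> ((\<lambda>d. cball d 1) ` D) = space m0"
      unfolding sp
    proof (auto)
      fix x :: 'a
      obtain d where "d \<in> D" "d \<in> ball x 1" using D(2)[of "ball x 1"] by auto
      then show "\<exists>d\<in>D. dist d x \<le> 1" by (auto simp: dist_commute intro!: bexI[of _ d])
    qed
  qed (use assms D in \<open>auto simp: less_top[symmetric]\<close>)
qed

lemma meas_distle:
  fixes M N :: "'a::polish_space measure"
  assumes "sets M = sets borel" "sets N = sets borel"
  shows "(\<lambda>(x,y). indicator (cball x r) y :: ennreal) \<in> borel_measurable (M \<Otimes>\<^sub>M N)"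
proof -
  have "{z::'a\<times>'a. dist (fst z) (snd z) \<le> r} \<in> sets borel"
    by (intro borel_closed closed_Collect_le continuous_intros)
  then have "{z::'a\<times>'a. dist (fst z) (snd z) \<le> r} \<in> sets (M \<Otimes>\<^sub>M N)"
    using sets_pair_measure_cong[OF assms] borel_prod by metis
  then have "(\<lambda>z. indicator {z::'a\<times>'a. dist (fst z) (snd z) \<le> r} z :: ennreal) \<in> borel_measurable (M \<Otimes>\<^sub>M N)"
    by simp
  moreover have "(\<lambda>(x,y). indicator (cball x r) y :: ennreal) = (\<lambda>z. indicator {z::'a\<times>'a. dist (fst z) (snd z) \<le> r} z)"
    by (auto simp: indicator_def fun_eq_iff)
  ultimately show ?thesis by simp
qed



lemma ind_sym: "indicator (cball x r) y = (indicator (cball y r) x :: ennreal)"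
  by (auto simp: indicator_def dist_commute)

lemma tonelli_ball:
  fixes mu m0 :: "'a::polish_space measure"
  assumes "sets mu = sets borel" "sets m0 = sets borel"
    "sigma_finite_measure mu" "sigma_finite_measure m0"
    and f: "f \<in> borel_measurable borel" and ph: "\<phi> \<in> borel_measurable borel"
  shows "(\<integral>\<^sup>+x. \<phi> x * (\<integral>\<^sup>+y. indicator (cball x r) y * f y \<partial>mu) \<partial>m0)
       = (\<integral>\<^sup>+y. f y * (\<integral>\<^sup>+x. indicator (cball y r) x * \<phi> x \<partial>m0) \<partial>mu)"
proof -
  interpret pair_sigma_finite m0 mu using assms(3,4) by (simp add: pair_sigma_finite_def)
  have m1: "(\<lambda>(x,y). indicator (cball x r) y :: ennreal) \<in> borel_measurable (m0 \<Otimes>\<^sub>M mu)"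
    using meas_distle assms(1,2) by blast
  have fm: "f \<in> borel_measurable mu" using f measurable_cong_sets[OF assms(1) refl] by blast
  have pm: "\<phi> \<in> borel_measurable m0" using ph measurable_cong_sets[OF assms(2) refl] by blast
  have F: "(\<lambda>(x,y). \<phi> x * indicator (cball x r) y * f y) \<in> borel_measurable (m0 \<Otimes>\<^sub>M mu)"
  proof -
    have a: "(\<lambda>z. \<phi> (fst z)) \<in> borel_measurable (m0 \<Otimes>\<^sub>M mu)" using pm by measurable
    have b: "(\<lambda>z. f (snd z)) \<in> borel_measurable (m0 \<Otimes>\<^sub>M mu)" using fm by measurable
    have c: "(\<lambda>z. indicator (cball (fst z) r) (snd z) :: ennreal) \<in> borel_measurable (m0 \<Otimes>\<^sub>M mu)"
      using m1 by (simp add: case_prod_beta')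
    have "(\<lambda>z. \<phi> (fst z) * indicator (cball (fst z) r) (snd z) * f (snd z)) \<in> borel_measurable (m0 \<Otimes>\<^sub>M mu)"
      using a b c by (intro borel_measurable_times_ennreal) auto
    then show ?thesis by (simp add: case_prod_beta')
  qed
  have "(\<integral>\<^sup>+x. \<phi> x * (\<integral>\<^sup>+y. indicator (cball x r) y * f y \<partial>mu) \<partial>m0)
      = (\<integral>\<^sup>+x. (\<integral>\<^sup>+y. \<phi> x * indicator (cball x r) y * f y \<partial>mu) \<partial>m0)"
  proof (rule nn_integral_cong)
    fix x
    have cb: "cball x r \<in> sets mu" using assms(1) by simp
    have "(\<lambda>y. indicator (cball x r) y * f y) \<in> borel_measurable mu"
      using fm cb by (intro borel_measurable_times_ennreal) auto
    then show "\<phi> x * (\<integral>\<^sup>+y. indicator (cball x r) y * f y \<partial>mu) = (\<integral>\<^sup>+y. \<phi> x * indicator (cball x r) y * f y \<partial>mu)"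
      by (subst nn_integral_cmult[symmetric]) (auto simp: mult.assoc)
  qed
  also have "\<dots> = (\<integral>\<^sup>+y. (\<integral>\<^sup>+x. \<phi> x * indicator (cball x r) y * f y \<partial>m0) \<partial>mu)"
    using Fubini'[OF F] by simp
  also have "\<dots> = (\<integral>\<^sup>+y. f y * (\<integral>\<^sup>+x. indicator (cball y r) x * \<phi> x \<partial>m0) \<partial>mu)"
  proof (rule nn_integral_cong)
    fix y
    show "(\<integral>\<^sup>+x. \<phi> x * indicator (cball x r) y * f y \<partial>m0) = f y * (\<integral>\<^sup>+x. indicator (cball y r) x * \<phi> x \<partial>m0)"
    proof -
      have cb: "cball y r \<in> sets m0" using assms(2) by simp
      have "(\<lambda>x. indicator (cball y r) x * \<phi> x) \<in> borel_measurable m0"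
        using pm cb by (intro borel_measurable_times_ennreal) auto
      then show ?thesis
        by (subst nn_integral_cmult[symmetric]) (auto simp: ind_sym[of _ r y] mult_ac intro!: nn_integral_cong)
    qed
  qed
  finally show ?thesis .
qed

lemma meas_ball:
  fixes mu :: "'a::polish_space measure"
  assumes "sets mu = sets borel" "sigma_finite_measure mu"
  shows "(\<lambda>x. emeasure mu (cball x r)) \<in> borel_measurable borel"
proof -
  interpret sigma_finite_measure mu by fact
  have "(\<lambda>x. \<integral>\<^sup>+y. indicator (cball x r) y \<partial>mu) \<in> borel_measurable borel"
    by (rule borel_measurable_nn_integral) (use meas_distle[OF refl assms(1)] in simp)
  moreover have "(\<lambda>x. \<integral>\<^sup>+y. indicator (cball x r) y \<partial>mu) = (\<lambda>x. emeasure mu (cball x r))"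
    using assms(1) by (auto intro!: nn_integral_indicator)
  ultimately show ?thesis by simp
qed

lemma meas_ballint:
  fixes mu :: "'a::polish_space measure"
  assumes "sets mu = sets borel" "sigma_finite_measure mu" "f \<in> borel_measurable borel"
  shows "(\<lambda>x. \<integral>\<^sup>+y. indicator (cball x r) y * f y \<partial>mu) \<in> borel_measurable borel"
proof -
  interpret sigma_finite_measure mu by fact
  have fm: "f \<in> borel_measurable mu" using assms(3) measurable_cong_sets[OF assms(1) refl] by blast
  have "(\<lambda>z. indicator (cball (fst z) r) (snd z) * f (snd z) :: ennreal) \<in> borel_measurable (borel \<Otimes>\<^sub>M mu)"
    using meas_distle[OF refl assms(1), of r] fm
    by (intro borel_measurable_times_ennreal) (auto simp: case_prod_beta')
  then show ?thesis
    by (intro borel_measurable_nn_integral) (simp add: case_prod_beta')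
qed

lemma meas_avg:
  fixes mu :: "'a::polish_space measure"
  assumes "sets mu = sets borel" "sigma_finite_measure mu" "f \<in> borel_measurable borel"
  shows "(\<lambda>x. avg mu (cball x r) f) \<in> borel_measurable borel"
proof -
  have "avg mu (cball x r) f = (\<integral>\<^sup>+y. indicator (cball x r) y * f y \<partial>mu) * inverse (emeasure mu (cball x r))" for x
    unfolding avg_def divide_ennreal_def by (simp add: nn_integral_set_ennreal mult.commute)
  moreover have "(\<lambda>x. (\<integral>\<^sup>+y. indicator (cball x r) y * f y \<partial>mu) * inverse (emeasure mu (cball x r))) \<in> borel_measurable borel"
    using meas_ballint[OF assms] meas_ball[OF assms(1,2)] by measurable
  ultimately show ?thesis by simp
qed



lemma young_pt:
  fixes t l p q :: real
  assumes "0 \<le> t" "0 < l" "1 < q" "q < p"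
  shows "t powr q \<le> (1 - q/p) * l powr q + (q/p) * l powr (q - p) * t powr p"
proof (cases "t = 0")
  case True
  then show ?thesis using assms by auto
next
  case False
  then have t: "t > 0" using assms by auto
  have p0: "p > 0" using assms by auto
  have "((t/l) powr p) powr (q/p) * 1 powr (1 - q/p) \<le> (q/p) * (t/l) powr p + (1 - q/p) * 1"
    using assms t p0 by (intro Youngs_inequality_0) (auto simp: field_simps)
  then have "(t/l) powr q \<le> (q/p) * (t/l) powr p + (1 - q/p)"
    using p0 by (simp add: powr_powr)
  then have "l powr q * (t/l) powr q \<le> l powr q * ((q/p) * (t/l) powr p + (1 - q/p))"
    by (intro mult_left_mono) auto
  moreover have "l powr q * (t/l) powr q = t powr q"
    using t assms by (simp add: powr_divide)
  moreover have "l powr q * (t/l) powr p = l powr (q - p) * t powr p"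
    using t assms by (simp add: powr_divide powr_diff field_simps)
  ultimately show ?thesis by (simp add: algebra_simps)
qed

lemma jensen_set:
  fixes mu :: "'a measure" and h :: "'a \<Rightarrow> real"
  assumes B: "B \<in> sets mu" "0 < emeasure mu B" "emeasure mu B < \<infinity>"
    and h: "h \<in> borel_measurable mu" "\<And>y. h y \<ge> 0" and pq: "1 < q" "q < p"
    and fin: "(\<integral>\<^sup>+y\<in>B. ennreal (h y powr p) \<partial>mu) < \<infinity>"
  shows "avg mu B (\<lambda>y. ennreal (h y powr q)) \<le> ennreal (enn2real (avg mu B (\<lambda>y. ennreal (h y powr p))) powr (q/p))"
proof -
  define M where "M = enn2real (emeasure mu B)"
  define I where "I = enn2real (\<integral>\<^sup>+y\<in>B. ennreal (h y powr p) \<partial>mu)"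
  have M: "M > 0" "emeasure mu B = ennreal M" using B unfolding M_def
    by (auto simp: enn2real_positive_iff less_top[symmetric] ennreal_enn2real_if)
  have I: "I \<ge> 0" "(\<integral>\<^sup>+y\<in>B. ennreal (h y powr p) \<partial>mu) = ennreal I" using fin unfolding I_def
    by (auto simp: less_top[symmetric] ennreal_enn2real_if)
  have avgp: "avg mu B (\<lambda>y. ennreal (h y powr p)) = ennreal (I / M)"
    unfolding avg_def using M I by (simp add: divide_ennreal)
  have p0: "p > 0" using pq by auto
  have meas: "(\<lambda>y. ennreal (h y powr p)) \<in> borel_measurable mu" "(\<lambda>y. ennreal (h y powr q)) \<in> borel_measurable mu"
    using h by auto
  show ?thesis
  proof (cases "I = 0")
    case True
    then have "(\<integral>\<^sup>+y. ennreal (h y powr p) * indicator B y \<partial>mu) = 0" using I by simp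
    then have "AE y in mu. ennreal (h y powr p) * indicator B y = 0"
      using meas B by (subst nn_integral_0_iff_AE[symmetric]) auto
    then have "AE y in mu. ennreal (h y powr q) * indicator B y = 0"
    proof (rule eventually_mono)
      fix y assume "ennreal (h y powr p) * indicator B y = 0"
      then show "ennreal (h y powr q) * indicator B y = 0"
        using h(2)[of y] by (auto simp: indicator_def)
    qed
    then have "(\<integral>\<^sup>+y\<in>B. ennreal (h y powr q) \<partial>mu) = 0"
      using meas B by (subst nn_integral_0_iff_AE) auto
    then show ?thesis unfolding avg_def by simp
  next
    case False
    then have I0: "I > 0" using I by auto
    define A where "A = I / M"
    have A: "A > 0" using I0 M by (simp add: A_def)
    define l where "l = A powr (1/p)"
    have l: "l > 0" using A by (simp add: l_def)
    have "(\<integral>\<^sup>+y\<in>B. ennreal (h y powr q) \<partial>mu)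
        \<le> (\<integral>\<^sup>+y. (ennreal ((1 - q/p) * l powr q) * indicator B y + ennreal ((q/p) * l powr (q - p)) * (ennreal (h y powr p) * indicator B y)) \<partial>mu)"
    proof (rule nn_integral_mono)
      fix y
      have "h y powr q \<le> (1 - q/p) * l powr q + (q/p) * l powr (q - p) * h y powr p"
        using young_pt[OF h(2) l pq] .
      then have "ennreal (h y powr q) \<le> ennreal ((1 - q/p) * l powr q) + ennreal ((q/p) * l powr (q - p)) * ennreal (h y powr p)"
        using pq p0 by (simp add: ennreal_plus[symmetric] ennreal_mult[symmetric] del: ennreal_plus)
      then show "ennreal (h y powr q) * indicator B y \<le> ennreal ((1 - q/p) * l powr q) * indicator B y + ennreal ((q/p) * l powr (q - p)) * (ennreal (h y powr p) * indicator B y)"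
        by (auto simp: indicator_def)
    qed
    also have "\<dots> = ennreal ((1 - q/p) * l powr q) * emeasure mu B + ennreal ((q/p) * l powr (q - p)) * (\<integral>\<^sup>+y\<in>B. ennreal (h y powr p) \<partial>mu)"
      using meas B by (subst nn_integral_add) (auto simp: nn_integral_cmult)
    also have "\<dots> = ennreal ((1 - q/p) * l powr q * M + (q/p) * l powr (q - p) * I)"
      using M I pq p0 by (simp add: ennreal_mult[symmetric] ennreal_plus[symmetric] del: ennreal_plus)
    also have "(1 - q/p) * l powr q * M + (q/p) * l powr (q - p) * I = A powr (q/p) * M"
    proof -
      have lq: "l powr q = A powr (q/p)" using A unfolding l_def by (simp add: powr_powr)
      have lqp: "l powr (q - p) * I = A powr (q/p) * M"
      proof -
        have "l powr (q - p) = A powr (q/p - 1)" using A p0 unfolding l_def by (simp add: powr_powr diff_divide_distrib)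
        also have "\<dots> = A powr (q/p) / A" using A by (simp add: powr_diff)
        finally show ?thesis using M A unfolding A_def by (simp add: field_simps)
      qed
      show ?thesis using lqp by (simp add: lq field_simps)
    qed
    finally have "(\<integral>\<^sup>+y\<in>B. ennreal (h y powr q) \<partial>mu) \<le> ennreal (A powr (q/p) * M)" .
    then have "avg mu B (\<lambda>y. ennreal (h y powr q)) \<le> ennreal (A powr (q/p) * M) / ennreal M"
      unfolding avg_def M(2) by (rule divide_right_mono_ennreal)
    also have "\<dots> = ennreal (A powr (q/p))" using M by (simp add: divide_ennreal)
    finally show ?thesis using avgp A unfolding A_def by simp
  qed
qed



lemma fin_real:
  fixes a :: ennreal
  assumes "0 < a" "a < \<infinity>"
  obtains a' where "a = ennreal a'" "a' > 0"
proof -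
  have "a = ennreal (enn2real a)" using assms by simp
  moreover have "enn2real a > 0" using assms by (simp add: enn2real_positive_iff)
  ultimately show ?thesis using that by blast
qed

lemma inv_le:
  fixes a b :: ennreal
  assumes "0 < a" "a < \<infinity>" "0 < b" "b < \<infinity>" "b \<le> ennreal D * a" "D \<ge> 0"
  shows "inverse a \<le> ennreal D * inverse b"
proof -
  obtain a' where a: "a = ennreal a'" "a' > 0" using assms(1,2)
    by (rule fin_real)
  obtain b' where b: "b = ennreal b'" "b' > 0" using assms(3,4)
    by (rule fin_real)
  have "b' \<le> D * a'" using assms(5,6) a b by (simp add: ennreal_mult[symmetric])
  then have "1/a' \<le> D / b'" using a b by (simp add: divide_simps mult.commute)
  then have "ennreal (1/a') \<le> ennreal (D / b')" by (rule ennreal_leI)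
  moreover have "inverse a = ennreal (1/a')" using a by (simp add: inverse_ennreal inverse_eq_divide)
  moreover have "ennreal D * inverse b = ennreal (D / b')" using b assms(6)
    by (simp add: inverse_ennreal ennreal_mult divide_inverse)
  ultimately show ?thesis by simp
qed

locale sett =
  fixes mu m0 :: "'a::polish_space measure" and D C1 Rm \<theta> :: real
  assumes smu: "sets mu = sets borel" and sm0: "sets m0 = sets borel"
    and pos: "\<And>x r. r > 0 \<Longrightarrow> 0 < emeasure mu (cball x r)"
    and fin: "\<And>x r. r > 0 \<Longrightarrow> emeasure mu (cball x r) < \<infinity>"
    and dbl: "\<And>x r. 0 < r \<Longrightarrow> r \<le> Rm \<Longrightarrow> emeasure mu (cball x (2*r)) \<le> ennreal D * emeasure mu (cball x r)"
    and D1: "D \<ge> 1" and C1: "C1 > 0" and Rm: "Rm \<ge> 1" and th: "\<theta> \<ge> 0"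
    and M2: "\<And>x r. 0 < r \<Longrightarrow> r \<le> 1 \<Longrightarrow> emeasure m0 (cball x r) \<le> ennreal C1 * emeasure mu (cball x r) / ennreal (r powr \<theta>)"
begin

lemma m0fin: "emeasure m0 (cball x 1) < \<infinity>"
proof -
  have "emeasure m0 (cball x 1) \<le> ennreal C1 * emeasure mu (cball x 1) / ennreal (1 powr \<theta>)"
    using M2[of 1 x] by simp
  also have "\<dots> < \<infinity>" using fin[of 1 x] by (simp add: ennreal_mult_less_top divide_ennreal_def)
  finally show ?thesis .
qed

lemma sfmu: "sigma_finite_measure mu" using sf_mu[OF smu fin] by auto
lemma sfm0: "sigma_finite_measure m0" using sf_m0[OF sm0 m0fin] by auto

lemma ball_cmp:
  assumes "x \<in> cball y \<rho>" "0 < \<rho>" "\<rho> \<le> Rm"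
  shows "inverse (emeasure mu (cball x \<rho>)) \<le> ennreal D * inverse (emeasure mu (cball y \<rho>))"
proof (rule inv_le)
  have "cball y \<rho> \<subseteq> cball x (2*\<rho>)" 
  proof
    fix z assume "z \<in> cball y \<rho>"
    then show "z \<in> cball x (2*\<rho>)" using assms(1) dist_triangle[of x z y] dist_commute[of x y] dist_commute[of z y]
      unfolding mem_cball by linarith
  qed
  then have "emeasure mu (cball y \<rho>) \<le> emeasure mu (cball x (2*\<rho>))"
    by (intro emeasure_mono) (auto simp: smu)
  also have "\<dots> \<le> ennreal D * emeasure mu (cball x \<rho>)" using dbl assms by auto
  finally show "emeasure mu (cball y \<rho>) \<le> ennreal D * emeasure mu (cball x \<rho>)" .
qed (use pos fin assms D1 in auto)

lemma kern_small:
  assumes "0 < \<rho>" "\<rho> \<le> 1"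
  shows "(\<integral>\<^sup>+x. indicator (cball y \<rho>) x * inverse (emeasure mu (cball x \<rho>)) \<partial>m0) \<le> ennreal (D * C1 / \<rho> powr \<theta>)"
proof -
  have "(\<integral>\<^sup>+x. indicator (cball y \<rho>) x * inverse (emeasure mu (cball x \<rho>)) \<partial>m0)
     \<le> (\<integral>\<^sup>+x. (ennreal D * inverse (emeasure mu (cball y \<rho>))) * indicator (cball y \<rho>) x \<partial>m0)"
    using ball_cmp assms Rm by (intro nn_integral_mono) (auto simp: indicator_def)
  also have "\<dots> = ennreal D * inverse (emeasure mu (cball y \<rho>)) * emeasure m0 (cball y \<rho>)"
    by (simp add: nn_integral_cmult_indicator sm0)
  also have "\<dots> \<le> ennreal D * inverse (emeasure mu (cball y \<rho>)) * (ennreal C1 * emeasure mu (cball y \<rho>) / ennreal (\<rho> powr \<theta>))"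
    using M2[OF assms] by (rule mult_left_mono) simp
  also have "\<dots> = ennreal (D * C1 / \<rho> powr \<theta>)"
  proof -
    obtain b where b: "emeasure mu (cball y \<rho>) = ennreal b" "b > 0"
      using pos[OF assms(1), of y] fin[OF assms(1), of y]
      by (rule fin_real)
    have 1: "ennreal C1 * ennreal b / ennreal (\<rho> powr \<theta>) = ennreal (C1 * b / \<rho> powr \<theta>)"
      using b C1 assms by (simp add: ennreal_mult[symmetric] divide_ennreal)
    have 2: "ennreal D * inverse (ennreal b) = ennreal (D / b)"
      using b D1 by (simp add: inverse_ennreal ennreal_mult divide_inverse)
    have 3: "ennreal (D / b) * ennreal (C1 * b / \<rho> powr \<theta>) = ennreal (D / b * (C1 * b / \<rho> powr \<theta>))"
      using b D1 C1 assms by (intro ennreal_mult[symmetric]) auto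
    have 4: "D / b * (C1 * b / \<rho> powr \<theta>) = D * C1 / \<rho> powr \<theta>" using b by simp
    show ?thesis unfolding b(1) 1 2 3 4 ..
  qed
  finally show ?thesis .
qed

lemma kern_base:
  assumes "0 < \<rho>" "\<rho> \<le> Rm"
  shows "(\<integral>\<^sup>+x. indicator (cball y \<rho>) x * inverse (emeasure mu (cball x \<rho>)) \<partial>m0)
     \<le> ennreal D * inverse (emeasure mu (cball y \<rho>)) * emeasure m0 (cball y \<rho>)"
proof -
  have "(\<integral>\<^sup>+x. indicator (cball y \<rho>) x * inverse (emeasure mu (cball x \<rho>)) \<partial>m0)
     \<le> (\<integral>\<^sup>+x. (ennreal D * inverse (emeasure mu (cball y \<rho>))) * indicator (cball y \<rho>) x \<partial>m0)"
    using ball_cmp assms by (intro nn_integral_mono) (auto simp: indicator_def)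
  also have "\<dots> = ennreal D * inverse (emeasure mu (cball y \<rho>)) * emeasure m0 (cball y \<rho>)"
    by (simp add: nn_integral_cmult_indicator sm0)
  finally show ?thesis .
qed

lemma m0_big:
  assumes "1 < \<rho>"
  shows "emeasure m0 (cball y \<rho>) \<le> ennreal (D * C1) * emeasure mu (cball y (\<rho> + 1))"
proof -
  define \<phi> where "\<phi> x = indicator (cball y \<rho>) x * inverse (emeasure mu (cball x 1))" for x
  have phm: "\<phi> \<in> borel_measurable borel" unfolding \<phi>_def
  proof (rule borel_measurable_times_ennreal)
    show "(\<lambda>x. inverse (emeasure mu (cball x 1))) \<in> borel_measurable borel"
      using meas_ball[OF smu sfmu, of 1] by (rule borel_measurable_inverse_ennreal)
  qed (rule borel_measurable_indicator, simp)
  have "emeasure m0 (cball y \<rho>) = (\<integral>\<^sup>+x. indicator (cball y \<rho>) x \<partial>m0)"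
    by (simp add: sm0)
  also have "\<dots> = (\<integral>\<^sup>+x. \<phi> x * (\<integral>\<^sup>+u. indicator (cball x 1) u * 1 \<partial>mu) \<partial>m0)"
  proof (rule nn_integral_cong)
    fix x
    have "(\<integral>\<^sup>+u. indicator (cball x 1) u * 1 \<partial>mu) = emeasure mu (cball x 1)"
      by (simp add: smu)
    moreover obtain b where "emeasure mu (cball x 1) = ennreal b" "b > 0"
      using pos[of 1 x] fin[of 1 x] by (auto elim: fin_real)
    ultimately show "indicator (cball y \<rho>) x = \<phi> x * (\<integral>\<^sup>+u. indicator (cball x 1) u * 1 \<partial>mu)"
    proof -
      assume a: "(\<integral>\<^sup>+u. indicator (cball x 1) u * 1 \<partial>mu) = emeasure mu (cball x 1)"
        "emeasure mu (cball x 1) = ennreal b" "b > 0"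
      have "inverse (ennreal b) * ennreal b = 1" using a(3)
        by (simp add: inverse_ennreal ennreal_mult[symmetric])
      then show ?thesis unfolding \<phi>_def a(1) a(2) by (simp add: mult.assoc)
    qed
  qed
  also have "\<dots> = (\<integral>\<^sup>+u. 1 * (\<integral>\<^sup>+x. indicator (cball u 1) x * \<phi> x \<partial>m0) \<partial>mu)"
    by (rule tonelli_ball[OF smu sm0 sfmu sfm0 _ phm]) simp
  also have "\<dots> \<le> (\<integral>\<^sup>+u. ennreal (D * C1) * indicator (cball y (\<rho> + 1)) u \<partial>mu)"
  proof (rule nn_integral_mono)
    fix u
    show "1 * (\<integral>\<^sup>+x. indicator (cball u 1) x * \<phi> x \<partial>m0) \<le> ennreal (D * C1) * indicator (cball y (\<rho> + 1)) u"
    proof (cases "u \<in> cball y (\<rho> + 1)")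
      case True
      have "(\<integral>\<^sup>+x. indicator (cball u 1) x * \<phi> x \<partial>m0) \<le> (\<integral>\<^sup>+x. indicator (cball u 1) x * inverse (emeasure mu (cball x 1)) \<partial>m0)"
        unfolding \<phi>_def by (intro nn_integral_mono) (auto simp: indicator_def)
      also have "\<dots> \<le> ennreal (D * C1 / 1 powr \<theta>)" by (rule kern_small) auto
      finally show ?thesis using True by simp
    next
      case False
      have "indicator (cball u 1) x * \<phi> x = 0" for x
      proof (cases "x \<in> cball u 1 \<and> x \<in> cball y \<rho>")
        case True
        then have "u \<in> cball y (\<rho> + 1)" using dist_triangle[of y u x] dist_commute[of u x] unfolding mem_cball by linarith
        then show ?thesis using False by simp
      qed (auto simp: \<phi>_def indicator_def)
      then have "(\<integral>\<^sup>+x. indicator (cball u 1) x * \<phi> x \<partial>m0) = (\<integral>\<^sup>+x. 0 \<partial>m0)"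
        by (intro nn_integral_cong) simp
      then show ?thesis using False by simp
    qed
  qed
  also have "\<dots> = ennreal (D * C1) * emeasure mu (cball y (\<rho> + 1))"
    by (simp add: nn_integral_cmult_indicator smu)
  finally show ?thesis .
qed

lemma kern_large:
  assumes "1 < \<rho>" "\<rho> \<le> Rm"
  shows "(\<integral>\<^sup>+x. indicator (cball y \<rho>) x * inverse (emeasure mu (cball x \<rho>)) \<partial>m0) \<le> ennreal (D^3 * C1)"
proof -
  have r0: "0 < \<rho>" using assms by auto
  obtain b where b: "emeasure mu (cball y \<rho>) = ennreal b" "b > 0"
    using pos[OF r0, of y] fin[OF r0, of y] by (auto elim: fin_real)
  have "emeasure mu (cball y (\<rho> + 1)) \<le> emeasure mu (cball y (2*\<rho>))"
    using assms by (intro emeasure_mono) (auto simp: smu)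
  also have "\<dots> \<le> ennreal D * emeasure mu (cball y \<rho>)" using dbl assms by auto
  finally have "emeasure m0 (cball y \<rho>) \<le> ennreal (D * C1) * (ennreal D * ennreal b)"
    using m0_big[OF assms(1), of y] b by (metis mult_left_mono order_trans zero_le)
  then have "emeasure m0 (cball y \<rho>) \<le> ennreal (D * C1 * (D * b))"
    using D1 C1 b by (simp add: ennreal_mult)
  then have "ennreal D * inverse (emeasure mu (cball y \<rho>)) * emeasure m0 (cball y \<rho>)
     \<le> ennreal D * inverse (ennreal b) * ennreal (D * C1 * (D * b))"
    unfolding b(1) by (rule mult_left_mono) simp
  also have "\<dots> = ennreal (D^3 * C1)"
  proof -
    have "ennreal D * inverse (ennreal b) = ennreal (D / b)"
      using b D1 by (simp add: inverse_ennreal ennreal_mult divide_inverse)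
    moreover have "ennreal (D / b) * ennreal (D * C1 * (D * b)) = ennreal (D / b * (D * C1 * (D * b)))"
      using b D1 C1 by (intro ennreal_mult[symmetric]) auto
    moreover have "D / b * (D * C1 * (D * b)) = D^3 * C1" using b by (simp add: power3_eq_cube)
    ultimately show ?thesis by simp
  qed
  finally show ?thesis using kern_base[OF r0 assms(2), of y] by simp
qed

lemma kern:
  assumes "0 < \<rho>" "\<rho> \<le> Rm"
  shows "(\<integral>\<^sup>+x. indicator (cball y \<rho>) x * inverse (emeasure mu (cball x \<rho>)) \<partial>m0) \<le> ennreal (D^3 * C1 * Rm powr \<theta> / \<rho> powr \<theta>)"
proof (cases "\<rho> \<le> 1")
  case True
  have "D * C1 / \<rho> powr \<theta> \<le> D^3 * C1 * Rm powr \<theta> / \<rho> powr \<theta>"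
  proof (rule divide_right_mono)
    have "1 * 1 \<le> D * D" using D1 by (intro mult_mono) auto
    then have "D * 1 \<le> D * (D * D)" using D1 by (intro mult_left_mono) auto
    then have "D \<le> D^3" by (simp add: power3_eq_cube)
    moreover have "1 \<le> Rm powr \<theta>" using Rm th by (simp add: ge_one_powr_ge_zero)
    ultimately have "D * 1 \<le> D^3 * Rm powr \<theta>" using D1 by (intro mult_mono) auto
    then show "D * C1 \<le> D^3 * C1 * Rm powr \<theta>" using C1 by (simp add: mult_right_mono mult.commute mult.left_commute)
  qed simp
  then show ?thesis using kern_small[OF assms(1) True, of y] by (meson ennreal_leI order_trans)
next
  case False
  have "D^3 * C1 \<le> D^3 * C1 * Rm powr \<theta> / \<rho> powr \<theta>"
  proof -
    have "\<rho> powr \<theta> \<le> Rm powr \<theta>" using assms th by (intro powr_mono2) auto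
    then have "1 \<le> Rm powr \<theta> / \<rho> powr \<theta>" using assms by simp
    then have "D^3 * C1 * 1 \<le> D^3 * C1 * (Rm powr \<theta> / \<rho> powr \<theta>)"
      using D1 C1 by (intro mult_left_mono) auto
    then show ?thesis by simp
  qed
  then show ?thesis using kern_large[OF _ assms(2), of y] False by (meson ennreal_leI order_trans not_le)
qed

lemma avg_int:
  assumes "0 < \<rho>" "\<rho> \<le> Rm" and H: "H \<in> borel_measurable borel"
  shows "(\<integral>\<^sup>+x. avg mu (cball x \<rho>) H \<partial>m0) \<le> ennreal (D^3 * C1 * Rm powr \<theta> / \<rho> powr \<theta>) * (\<integral>\<^sup>+y. H y \<partial>mu)"
proof -
  let ?K = "ennreal (D^3 * C1 * Rm powr \<theta> / \<rho> powr \<theta>)"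
  have "avg mu (cball x \<rho>) H = inverse (emeasure mu (cball x \<rho>)) * (\<integral>\<^sup>+y. indicator (cball x \<rho>) y * H y \<partial>mu)" for x
    unfolding avg_def divide_ennreal_def by (simp add: nn_integral_set_ennreal mult.commute)
  then have "(\<integral>\<^sup>+x. avg mu (cball x \<rho>) H \<partial>m0) = (\<integral>\<^sup>+x. inverse (emeasure mu (cball x \<rho>)) * (\<integral>\<^sup>+y. indicator (cball x \<rho>) y * H y \<partial>mu) \<partial>m0)"
    by simp
  also have "\<dots> = (\<integral>\<^sup>+y. H y * (\<integral>\<^sup>+x. indicator (cball y \<rho>) x * inverse (emeasure mu (cball x \<rho>)) \<partial>m0) \<partial>mu)"
    by (rule tonelli_ball[OF smu sm0 sfmu sfm0 H]) (rule borel_measurable_inverse_ennreal[OF meas_ball[OF smu sfmu]])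
  also have "\<dots> \<le> (\<integral>\<^sup>+y. ?K * H y \<partial>mu)"
  proof (rule nn_integral_mono)
    fix y
    show "H y * (\<integral>\<^sup>+x. indicator (cball y \<rho>) x * inverse (emeasure mu (cball x \<rho>)) \<partial>m0) \<le> ?K * H y"
      using mult_left_mono[OF kern[OF assms(1,2), of y], of "H y"] by (simp add: mult.commute)
  qed
  also have "\<dots> = ?K * (\<integral>\<^sup>+y. H y \<partial>mu)"
    using H measurable_cong_sets[OF smu refl] by (intro nn_integral_cmult) auto
  finally show ?thesis .
qed

end


lemma real_term:
  fixes r \<rho> aq ap D \<alpha> p q :: real
  assumes "0 < r" "r \<le> \<rho>" "0 \<le> aq" "aq \<le> D * ap powr (q/p)" "0 \<le> ap" "D \<ge> 1" "\<alpha> > 0" "1 < q" "q < p"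
  shows "r powr \<alpha> * aq powr (1/q) \<le> (D powr (p/q) * \<rho> powr (\<alpha>*p) * ap) powr (1/p)"
proof -
  have p0: "p > 0" "q > 0" using assms by auto
  have R: "(D powr (p/q) * \<rho> powr (\<alpha>*p) * ap) powr (1/p) = D powr (1/q) * \<rho> powr \<alpha> * ap powr (1/p)"
    using assms p0 by (simp add: powr_mult powr_powr)
  have "aq powr (1/q) \<le> (D * ap powr (q/p)) powr (1/q)"
    using assms p0 by (intro powr_mono2) auto
  also have "\<dots> = D powr (1/q) * ap powr (1/p)"
    using assms p0 by (simp add: powr_mult powr_powr)
  finally have a: "aq powr (1/q) \<le> D powr (1/q) * ap powr (1/p)" .
  have b: "r powr \<alpha> \<le> \<rho> powr \<alpha>" using assms by (intro powr_mono2) auto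
  have "r powr \<alpha> * aq powr (1/q) \<le> \<rho> powr \<alpha> * (D powr (1/q) * ap powr (1/p))"
    using a b by (intro mult_mono) auto
  then show ?thesis unfolding R by (simp add: mult_ac)
qed

lemma dyadic:
  fixes r R :: real
  assumes "0 < r" "r \<le> R"
  shows "\<exists>j::nat. r \<le> R / 2^j \<and> R / 2^j \<le> 2 * r"
proof -
  define P where "P j \<longleftrightarrow> R / 2^(Suc j) < r" for j :: nat
  obtain n where n: "R / r < 2^n" using real_arch_pow[of 2 "R/r"] by auto
  have "P n"
  proof -
    have "R < r * 2^n" using n assms by (simp add: field_simps)
    also have "\<dots> \<le> r * 2^Suc n" using assms by simp
    finally show ?thesis unfolding P_def using assms by (simp add: field_simps)
  qed
  define j where "j = (LEAST j. P j)"
  have Pj: "P j" unfolding j_def using \<open>P n\<close> by (rule LeastI)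
  have "r \<le> R / 2^j"
  proof (cases j)
    case 0 then show ?thesis using assms by simp
  next
    case (Suc i)
    then have "\<not> P i" unfolding j_def using not_less_Least[of i P] by simp
    then show ?thesis using Suc unfolding P_def by simp
  qed
  moreover have "R / 2^j \<le> 2 * r" using Pj unfolding P_def by (simp add: field_simps)
  ultimately show ?thesis by blast
qed

context sett begin

lemma avg_compare:
  assumes "0 < r" "r \<le> \<rho>" "\<rho> \<le> 2*r" "r \<le> Rm"
  shows "avg mu (cball x r) f \<le> ennreal D * avg mu (cball x \<rho>) f"
proof -
  have r0: "\<rho> > 0" using assms by auto
  have I: "(\<integral>\<^sup>+y\<in>cball x r. f y \<partial>mu) \<le> (\<integral>\<^sup>+y\<in>cball x \<rho>. f y \<partial>mu)"
    using assms by (intro nn_integral_mono) (auto simp: indicator_def)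
  have "emeasure mu (cball x \<rho>) \<le> emeasure mu (cball x (2*r))"
    using assms by (intro emeasure_mono) (auto simp: smu)
  also have "\<dots> \<le> ennreal D * emeasure mu (cball x r)" using dbl assms by auto
  finally have "inverse (emeasure mu (cball x r)) \<le> ennreal D * inverse (emeasure mu (cball x \<rho>))"
    using pos fin assms r0 D1 by (intro inv_le) auto
  then have "(\<integral>\<^sup>+y\<in>cball x r. f y \<partial>mu) * inverse (emeasure mu (cball x r))
      \<le> (\<integral>\<^sup>+y\<in>cball x \<rho>. f y \<partial>mu) * (ennreal D * inverse (emeasure mu (cball x \<rho>)))"
    using I by (intro mult_mono) auto
  then show ?thesis unfolding avg_def divide_ennreal_def by (simp add: mult_ac)
qed

end


context sett begin

lemma ptw:
  fixes g :: "'a \<Rightarrow> real" and p q \<alpha> R :: real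
  assumes pq: "1 < q" "q < p" and al: "\<alpha> > 0" and R: "0 < R" "R \<le> Rm"
    and gm: "g \<in> borel_measurable mu" and gfin: "(\<integral>\<^sup>+y. ennreal (\<bar>g y\<bar> powr p) \<partial>mu) < \<infinity>"
  shows "epowr (maxfun mu q \<alpha> R g x) p \<le> (\<Sum>j. ennreal (D powr (p/q) * (R/2^j) powr (\<alpha>*p)) * avg mu (cball x (R/2^j)) (\<lambda>y. ennreal (\<bar>g y\<bar> powr p)))"
proof -
  let ?Ap = "\<lambda>\<rho>. avg mu (cball x \<rho>) (\<lambda>y. ennreal (\<bar>g y\<bar> powr p))"
  let ?Aq = "\<lambda>\<rho>. avg mu (cball x \<rho>) (\<lambda>y. ennreal (\<bar>g y\<bar> powr q))"
  let ?c = "D powr (p/q)"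
  let ?G = "\<Sum>j. ennreal (?c * (R/2^j) powr (\<alpha>*p)) * ?Ap (R/2^j)"
  have p0: "p > 0" using pq by auto
  have setfin: "(\<integral>\<^sup>+y\<in>cball x \<rho>. ennreal (\<bar>g y\<bar> powr p) \<partial>mu) < \<infinity>" for \<rho>
  proof -
    have "(\<integral>\<^sup>+y\<in>cball x \<rho>. ennreal (\<bar>g y\<bar> powr p) \<partial>mu) \<le> (\<integral>\<^sup>+y. ennreal (\<bar>g y\<bar> powr p) \<partial>mu)"
      by (intro nn_integral_mono) (auto simp: indicator_def)
    then show ?thesis using gfin by (rule le_less_trans)
  qed
  have Apfin: "?Ap \<rho> < \<infinity>" if "\<rho> > 0" for \<rho>
    using setfin[of \<rho>] pos[OF that, of x] unfolding avg_def
    by (simp add: less_top[symmetric] ennreal_divide_eq_top_iff) (metis less_irrefl)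
  show ?thesis
  proof (cases "?G = \<infinity>")
    case True then show ?thesis by simp
  next
    case False
    then have "?G < top" by (simp add: less_top)
    then obtain gx where gx: "?G = ennreal gx" "gx \<ge> 0" unfolding less_top_ennreal by blast
    have each: "ennreal (r powr \<alpha>) * epowr (?Aq r) (1/q) \<le> ennreal (gx powr (1/p))" if r: "r \<in> {0<..R}" for r
    proof -
      obtain j :: nat where j: "r \<le> R/2^j" "R/2^j \<le> 2*r" using dyadic[of r R] r by auto
      define \<rho> where "\<rho> = R/2^j"
      have \<rho>: "\<rho> > 0" "r \<le> \<rho>" "\<rho> \<le> 2*r" using j R unfolding \<rho>_def by auto
      define ap where "ap = enn2real (?Ap \<rho>)"
      have ap: "?Ap \<rho> = ennreal ap" "ap \<ge> 0" using Apfin[OF \<rho>(1)] unfolding ap_def by auto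
      have jen: "?Aq \<rho> \<le> ennreal (ap powr (q/p))"
        using jensen_set[of "cball x \<rho>" mu "\<lambda>y. \<bar>g y\<bar>" q p] pos[OF \<rho>(1), of x] fin[OF \<rho>(1), of x] setfin[of \<rho>] gm pq
        unfolding ap_def by (auto simp: smu)
      have "?Aq r \<le> ennreal D * ?Aq \<rho>"
        using avg_compare[of r \<rho>] \<rho> r R by auto
      also have "\<dots> \<le> ennreal D * ennreal (ap powr (q/p))" using jen by (rule mult_left_mono) simp
      also have "\<dots> = ennreal (D * ap powr (q/p))" using D1 by (simp add: ennreal_mult)
      finally have Aq: "?Aq r \<le> ennreal (D * ap powr (q/p))" .
      define aq where "aq = enn2real (?Aq r)"
      have aqfin: "?Aq r < \<infinity>" using Aq by (rule le_less_trans) simp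
      have aq: "?Aq r = ennreal aq" "aq \<ge> 0" "aq \<le> D * ap powr (q/p)"
        using aqfin unfolding aq_def apply auto
        using enn2real_mono[OF Aq] D1 by simp
      have "ennreal (r powr \<alpha>) * epowr (?Aq r) (1/q) = ennreal (r powr \<alpha> * aq powr (1/q))"
        unfolding epowr_def using aq by (simp add: ennreal_mult)
      also have "\<dots> \<le> ennreal ((?c * \<rho> powr (\<alpha>*p) * ap) powr (1/p))"
        using \<rho> r aq ap D1 al pq by (intro ennreal_leI real_term) auto
      also have "\<dots> \<le> ennreal (gx powr (1/p))"
      proof -
        have "ennreal (?c * \<rho> powr (\<alpha>*p)) * ?Ap \<rho> \<le> ?G"
          unfolding \<rho>_def using sum_le_suminf[of "\<lambda>j. ennreal (?c * (R/2^j) powr (\<alpha>*p)) * ?Ap (R/2^j)" "{j}"]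
          by (auto intro: summableI)
        moreover have "ennreal (?c * \<rho> powr (\<alpha>*p)) * ?Ap \<rho> = ennreal (?c * \<rho> powr (\<alpha>*p) * ap)"
          using ap by (simp add: ennreal_mult)
        ultimately have "?c * \<rho> powr (\<alpha>*p) * ap \<le> gx" using gx by (simp add: ennreal_le_iff)
        then show ?thesis using ap p0 by (intro ennreal_leI powr_mono2) auto
      qed
      finally show ?thesis .
    qed
    have mf: "maxfun mu q \<alpha> R g x \<le> ennreal (gx powr (1/p))"
      unfolding maxfun_def by (rule SUP_least) (use each in auto)
    then have mfin: "maxfun mu q \<alpha> R g x \<noteq> \<infinity>" by (auto simp: top_unique)
    have "enn2real (maxfun mu q \<alpha> R g x) \<le> gx powr (1/p)"
      using enn2real_mono[OF mf] by simp
    then have "enn2real (maxfun mu q \<alpha> R g x) powr p \<le> (gx powr (1/p)) powr p"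
      using p0 by (intro powr_mono2) auto
    also have "\<dots> = gx" using gx p0 by (simp add: powr_powr)
    finally show ?thesis unfolding epowr_def using mfin gx by (simp add: ennreal_leI)
  qed
qed

end


lemma geo_ennreal:
  fixes A q0 :: real
  assumes "A \<ge> 0" "0 \<le> q0" "q0 < 1"
  shows "(\<Sum>j. ennreal (A * q0^j)) = ennreal (A / (1 - q0))"
proof -
  have s: "summable (\<lambda>j. q0^j)" using assms by (intro summable_geometric) auto
  have "(\<Sum>j. ennreal (A * q0^j)) = ennreal (\<Sum>j. A * q0^j)"
    using assms s by (intro suminf_ennreal2 summable_mult) auto
  also have "(\<Sum>j. A * q0^j) = A * (1 / (1 - q0))"
    using s assms by (simp add: suminf_mult suminf_geometric)
  finally show ?thesis by simp
qed

lemma pow_split: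
  fixes R s :: real and j :: nat
  assumes "R > 0"
  shows "(R / 2^j) powr s = R powr s * ((1/2) powr s)^j"
proof -
  have "(R / 2^j) powr s = R powr s * ((1/2)^j) powr s"
    using assms by (simp add: powr_divide power_one_over)
  also have "((1/2::real)^j) powr s = ((1/2) powr s)^j"
    by (simp add: powr_realpow[symmetric] powr_powr mult.commute)
  finally show ?thesis .
qed

lemma em: "0 \<le> a \<Longrightarrow> 0 \<le> b \<Longrightarrow> ennreal a * (ennreal b * X) = ennreal (a*b) * X"
  by (simp add: ennreal_mult mult.assoc)

lemma final_step:
  fixes I1 I2 :: ennreal
  assumes "I1 \<le> ennreal Cst * I2" "I2 < \<infinity>" "Cst > 0" "p > 0"
  shows "epowr I1 (1/p) \<le> ennreal (Cst powr (1/p)) * epowr I2 (1/p)"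
proof -
  have "I2 < top" using assms(2) by simp
  then obtain i2 where i2: "I2 = ennreal i2" "i2 \<ge> 0" unfolding less_top_ennreal by blast
  have "I1 \<le> ennreal (Cst * i2)" using assms i2 by (simp add: ennreal_mult)
  then have fin: "I1 \<noteq> \<infinity>" by (auto simp: top_unique)
  have "enn2real I1 \<le> Cst * i2" using enn2real_mono[OF \<open>I1 \<le> ennreal (Cst * i2)\<close>] assms i2 by simp
  then have "enn2real I1 powr (1/p) \<le> (Cst * i2) powr (1/p)" using assms by (intro powr_mono2) auto
  also have "\<dots> = Cst powr (1/p) * i2 powr (1/p)" using assms i2 by (simp add: powr_mult)
  finally show ?thesis unfolding epowr_def using fin i2 by (simp add: ennreal_mult[symmetric])
qed

context sett begin

lemma integ:
  fixes g :: "'a \<Rightarrow> real" and p q \<alpha> R :: real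
  assumes pq: "1 < q" "q < p" and al: "\<alpha> > 0" and R: "0 < R" "R \<le> Rm" and s: "\<alpha> * p > \<theta>"
    and gm: "g \<in> borel_measurable mu" and gfin: "(\<integral>\<^sup>+y. ennreal (\<bar>g y\<bar> powr p) \<partial>mu) < \<infinity>"
  shows "(\<integral>\<^sup>+x. epowr (maxfun mu q \<alpha> R g x) p \<partial>m0) \<le>
     ennreal (D powr (p/q) * (D^3 * C1 * Rm powr \<theta>) * R powr (\<alpha>*p - \<theta>) / (1 - (1/2) powr (\<alpha>*p - \<theta>))) * (\<integral>\<^sup>+y. ennreal (\<bar>g y\<bar> powr p) \<partial>mu)"
proof -
  let ?H = "\<lambda>y. ennreal (\<bar>g y\<bar> powr p)"
  let ?c = "D powr (p/q)"
  let ?K = "D^3 * C1 * Rm powr \<theta>"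
  define sx where "sx = \<alpha>*p - \<theta>"
  define q0 where "q0 = (1/2::real) powr sx"
  have sx: "sx > 0" using s unfolding sx_def by simp
  have q0: "0 \<le> q0" "q0 < 1" unfolding q0_def using sx by (auto simp: powr01_less_one)
  have K0: "?K \<ge> 0" using D1 C1 by simp
  have gb: "g \<in> borel_measurable borel" using gm measurable_cong_sets[OF smu refl] by blast
  have Hb: "?H \<in> borel_measurable borel" using gb by measurable
  have Apm: "(\<lambda>x. avg mu (cball x \<rho>) ?H) \<in> borel_measurable m0" for \<rho>
    using meas_avg[OF smu sfmu Hb] measurable_cong_sets[OF sm0 refl] by blast
  have "(\<integral>\<^sup>+x. epowr (maxfun mu q \<alpha> R g x) p \<partial>m0) \<le>
     (\<integral>\<^sup>+x. (\<Sum>j. ennreal (?c * (R/2^j) powr (\<alpha>*p)) * avg mu (cball x (R/2^j)) ?H) \<partial>m0)"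
    by (intro nn_integral_mono ptw[OF pq al R gm gfin])
  also have "\<dots> = (\<Sum>j. \<integral>\<^sup>+x. ennreal (?c * (R/2^j) powr (\<alpha>*p)) * avg mu (cball x (R/2^j)) ?H \<partial>m0)"
    using Apm by (intro nn_integral_suminf) auto
  also have "\<dots> = (\<Sum>j. ennreal (?c * (R/2^j) powr (\<alpha>*p)) * \<integral>\<^sup>+x. avg mu (cball x (R/2^j)) ?H \<partial>m0)"
    using Apm by (intro suminf_cong nn_integral_cmult) auto
  also have "\<dots> \<le> (\<Sum>j. ennreal (?c * (R/2^j) powr (\<alpha>*p)) * (ennreal (?K / (R/2^j) powr \<theta>) * (\<integral>\<^sup>+y. ?H y \<partial>mu)))"
  proof (intro suminf_le mult_left_mono avg_int)
    fix j :: nat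
    have "R / 2^j \<le> R" using R by (simp add: divide_le_eq)
    then show "R / 2^j \<le> Rm" using R by simp
  qed (use R Hb in auto)
  also have "\<dots> = (\<Sum>j. ennreal (?c * ?K * R powr sx * q0^j) * (\<integral>\<^sup>+y. ?H y \<partial>mu))"
  proof (intro suminf_cong)
    fix j :: nat
    have rj: "R / 2^j > 0" using R by simp
    have "?c * (R/2^j) powr (\<alpha>*p) * (?K / (R/2^j) powr \<theta>) = ?c * ?K * ((R/2^j) powr (\<alpha>*p) / (R/2^j) powr \<theta>)"
      by simp
    also have "(R/2^j) powr (\<alpha>*p) / (R/2^j) powr \<theta> = (R/2^j) powr sx"
      unfolding sx_def using rj by (simp add: powr_diff)
    also have "\<dots> = R powr sx * q0^j" unfolding q0_def using R(1) by (rule pow_split)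
    finally have e: "?c * (R/2^j) powr (\<alpha>*p) * (?K / (R/2^j) powr \<theta>) = ?c * ?K * R powr sx * q0^j"
      by (simp add: mult_ac)
    show "ennreal (?c * (R/2^j) powr (\<alpha>*p)) * (ennreal (?K / (R/2^j) powr \<theta>) * (\<integral>\<^sup>+y. ?H y \<partial>mu))
        = ennreal (?c * ?K * R powr sx * q0^j) * (\<integral>\<^sup>+y. ?H y \<partial>mu)"
    proof -
      have nn1: "0 \<le> ?c * (R/2^j) powr (\<alpha>*p)" by (rule mult_nonneg_nonneg[OF powr_ge_zero powr_ge_zero])
      have nn2: "0 \<le> ?K / (R/2^j) powr \<theta>" by (rule divide_nonneg_nonneg[OF K0 powr_ge_zero])
      note em[OF nn1 nn2, of "\<integral>\<^sup>+y. ?H y \<partial>mu"]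
      also have "ennreal (?c * (R/2^j) powr (\<alpha>*p) * (?K / (R/2^j) powr \<theta>)) * (\<integral>\<^sup>+y. ?H y \<partial>mu)
          = ennreal (?c * ?K * R powr sx * q0^j) * (\<integral>\<^sup>+y. ?H y \<partial>mu)"
        by (rule arg_cong[where f="\<lambda>z. ennreal z * (\<integral>\<^sup>+y. ?H y \<partial>mu)", OF e])
      finally show ?thesis .
    qed
  qed
  also have "\<dots> = (\<integral>\<^sup>+y. ?H y \<partial>mu) * (\<Sum>j. ennreal (?c * ?K * R powr sx * q0^j))"
    by (subst ennreal_suminf_cmult[symmetric]) (simp only: mult.commute)
  also have "\<dots> = (\<Sum>j. ennreal (?c * ?K * R powr sx * q0^j)) * (\<integral>\<^sup>+y. ?H y \<partial>mu)"
    by (rule mult.commute)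
  also have "(\<Sum>j. ennreal (?c * ?K * R powr sx * q0^j)) = ennreal (?c * ?K * R powr sx / (1 - q0))"
  proof (rule geo_ennreal[OF _ q0])
    show "0 \<le> ?c * ?K * R powr sx" by (rule mult_nonneg_nonneg[OF mult_nonneg_nonneg[OF powr_ge_zero K0] powr_ge_zero])
  qed
  finally show ?thesis unfolding sx_def q0_def .
qed

end


theorem lemma9p1:
  fixes \<mu> :: "('a::polish_space) measure" and m :: "nat \<Rightarrow> 'a measure"
    and p q \<theta> \<epsilon> \<alpha> :: real and S :: "'a set"
  assumes "mms \<mu>"
    and "1 < p" and "class_A \<mu> p"
    and "1 < q" and "q < p" and "class_A \<mu> q"
    and "0 \<le> \<theta>" and "\<theta> < q"
    and "LCR \<mu> \<theta> S" and "closed S"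
    and "0 < \<epsilon>" and "\<epsilon> \<le> 1/10" and "frakM \<mu> \<theta> S \<epsilon> m"
    and "\<alpha> > \<theta> / p"
  shows "\<forall>R>0. \<exists>C>0. \<forall>g. g \<in> borel_measurable \<mu> \<and>
            (\<integral>\<^sup>+ x. ennreal (\<bar>g x\<bar> powr p) \<partial>\<mu>) < \<infinity> \<longrightarrow>
            lp_norm (m 0) (maxfun \<mu> q \<alpha> R g) p \<le> ennreal C * lp_norm \<mu> (\<lambda>x. ennreal \<bar>g x\<bar>) p"
proof (intro allI impI)
  fix R :: real assume R: "R > 0"
  have smu: "sets \<mu> = sets borel" and pos: "\<And>x r. r > 0 \<Longrightarrow> 0 < emeasure \<mu> (cball x r)"
    and fin: "\<And>x r. r > 0 \<Longrightarrow> emeasure \<mu> (cball x r) < \<infinity>"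
    using assms(1) unfolding mms_def by auto
  define Rm where "Rm = max R 1"
  have Rmf: "Rm \<ge> 1" "R \<le> Rm" "Rm > 0" unfolding Rm_def by auto
  have "unif_loc_doubling \<mu>" using assms(6) unfolding class_A_def by auto
  then obtain D0 where D0: "\<And>r x. r \<in> {0<..Rm} \<Longrightarrow> emeasure \<mu> (cball x (2*r)) \<le> ennreal D0 * emeasure \<mu> (cball x r)"
    unfolding unif_loc_doubling_def using Rmf(3) by blast
  define D where "D = max D0 1"
  have D1: "D \<ge> 1" unfolding D_def by simp
  have dbl: "emeasure \<mu> (cball x (2*r)) \<le> ennreal D * emeasure \<mu> (cball x r)" if "0 < r" "r \<le> Rm" for x r
  proof -
    have "emeasure \<mu> (cball x (2*r)) \<le> ennreal D0 * emeasure \<mu> (cball x r)" using D0 that by auto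
    also have "\<dots> \<le> ennreal D * emeasure \<mu> (cball x r)" unfolding D_def
      by (intro mult_right_mono ennreal_leI) auto
    finally show ?thesis .
  qed
  have fM: "\<forall>k. loc_finite_borel (m k)"
    and "\<exists>C1>0. \<forall>k x r. 0 < r \<and> r \<le> \<epsilon> ^ k \<longrightarrow>
        emeasure (m k) (cball x r) \<le> ennreal C1 * emeasure \<mu> (cball x r) / ennreal (r powr \<theta>)"
    using assms(13) unfolding frakM_def by blast+
  then obtain C1 where C1: "C1 > 0" and M2: "\<And>x r. 0 < r \<Longrightarrow> r \<le> 1 \<Longrightarrow>
        emeasure (m 0) (cball x r) \<le> ennreal C1 * emeasure \<mu> (cball x r) / ennreal (r powr \<theta>)"
    by (metis power_0)
  have sm0: "sets (m 0) = sets borel" using fM unfolding loc_finite_borel_def by auto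
  interpret sett \<mu> "m 0" D C1 Rm \<theta>
    by unfold_locales (use smu sm0 pos fin dbl D1 C1 Rmf assms(7) M2 in auto)
  have p0: "p > 0" using assms(2) by simp
  have al: "\<alpha> > 0" using assms(7,14) p0 by (smt (verit) divide_nonneg_pos)
  have s: "\<alpha> * p > \<theta>" using assms(14) p0 by (simp add: divide_less_eq mult.commute)
  define sx where "sx = \<alpha>*p - \<theta>"
  have sx: "sx > 0" using s unfolding sx_def by simp
  define Cst where "Cst = D powr (p/q) * (D^3 * C1 * Rm powr \<theta>) * R powr (\<alpha>*p - \<theta>) / (1 - (1/2) powr (\<alpha>*p - \<theta>))"
  have q0: "(1/2::real) powr sx < 1" using sx by (simp add: powr01_less_one)
  have Cst: "Cst > 0" unfolding Cst_def sx_def[symmetric] using D1 C1 R q0 Rmf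
    by (intro divide_pos_pos mult_pos_pos) auto
  show "\<exists>C>0. \<forall>g. g \<in> borel_measurable \<mu> \<and>
            (\<integral>\<^sup>+ x. ennreal (\<bar>g x\<bar> powr p) \<partial>\<mu>) < \<infinity> \<longrightarrow>
            lp_norm (m 0) (maxfun \<mu> q \<alpha> R g) p \<le> ennreal C * lp_norm \<mu> (\<lambda>x. ennreal \<bar>g x\<bar>) p"
  proof (intro exI[of _ "Cst powr (1/p)"] conjI allI impI)
    show "Cst powr (1/p) > 0" using Cst by simp
    fix g :: "'a \<Rightarrow> real"
    assume g: "g \<in> borel_measurable \<mu> \<and> (\<integral>\<^sup>+ x. ennreal (\<bar>g x\<bar> powr p) \<partial>\<mu>) < \<infinity>"
    have I: "(\<integral>\<^sup>+x. epowr (maxfun \<mu> q \<alpha> R g x) p \<partial>m 0) \<le> ennreal Cst * (\<integral>\<^sup>+y. ennreal (\<bar>g y\<bar> powr p) \<partial>\<mu>)"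
      unfolding Cst_def using integ[OF assms(4,5) al R Rmf(2) s] g by blast
    have e: "(\<lambda>x. epowr (ennreal \<bar>g x\<bar>) p) = (\<lambda>x. ennreal (\<bar>g x\<bar> powr p))"
      by (simp add: epowr_def)
    show "lp_norm (m 0) (maxfun \<mu> q \<alpha> R g) p \<le> ennreal (Cst powr (1/p)) * lp_norm \<mu> (\<lambda>x. ennreal \<bar>g x\<bar>) p"
      unfolding lp_norm_def e using final_step[OF I _ Cst p0] g by simp
  qed
qed


end
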